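(* As an abelian group, $H=F[1/t]$ is free.
   Context: $F\subseteq\mathbb{Q}[t]$ is the ring of numerical polynomials (polynomials $f$ with $f(n)\in\mathbb{Z}$ for all integers $n\gg0$), and $H=F[1/t]$ is its localization at $t$, viewed as a subring of $\mathbb{Q}[t,1/t]$. *)

theory Defs
  imports "HOL-Computational_Algebra.Computational_Algebra" "HOL-Computational_Algebra.Polynomial_FPS"
begin

definition numerical_polys :: "rat poly set" where
  "numerical_polys = {f. \<exists>N::int. \<forall>n::int. n \<ge> N \<longrightarrow> poly f (of_int n) \<in> \<int>}"

definition laurent_of_poly :: "rat poly \<Rightarrow> rat fls" where
  "laurent_of_poly p = fps_to_fls (fps_of_poly p)"

text \<open>H = F[1/t] as a subring of Q[t,1/t]: elements f * t^(-k) with f in F.\<close>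
definition H_ring :: "rat fls set" where
  "H_ring = {laurent_of_poly f * fls_X_inv ^ k | f k. f \<in> numerical_polys}"

definition zspan :: "'a::comm_ring_1 set \<Rightarrow> 'a set" where
  "zspan B = {\<Sum>b\<in>S. of_int (c b) * b | S c. finite S \<and> S \<subseteq> B}"

definition zindependent :: "'a::comm_ring_1 set \<Rightarrow> bool" where
  "zindependent B \<longleftrightarrow> (\<forall>S c. finite S \<and> S \<subseteq> B \<and> (\<Sum>b\<in>S. of_int (c b) * b) = 0 \<longrightarrow> (\<forall>b\<in>S. c b = (0::int)))"

definition free_abelian :: "'a::comm_ring_1 set \<Rightarrow> bool" where
  "free_abelian A \<longleftrightarrow> (\<exists>B. B \<subseteq> A \<and> zindependent B \<and> zspan B = A)"

end

theory Submission
  imports Defs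
begin

lemma cyclic_rat_subgroup:
  fixes C :: "rat set"
  assumes z: "0 \<in> C" and cl: "\<And>x y m. x \<in> C \<Longrightarrow> y \<in> C \<Longrightarrow> x - of_int m * y \<in> C"
    and D: "D \<noteq> 0" "\<And>x. x \<in> C \<Longrightarrow> of_int D * x \<in> \<int>"
  shows "\<exists>g. C = range (\<lambda>m::int. of_int m * g)"
proof -
  define I where "I = {i::int. of_int i / of_int D \<in> C}"
  have Icl: "i - m * j \<in> I" if "i \<in> I" "j \<in> I" for i j m
    using cl[of "of_int i / of_int D" "of_int j / of_int D" m] that
    by (simp add: I_def diff_divide_distrib)
  have I0: "0 \<in> I" using z by (simp add: I_def)
  have CI: "x \<in> C \<Longrightarrow> \<exists>i\<in>I. x = of_int i / of_int D" for x
  proof -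
    assume "x \<in> C"
    then obtain i where i: "of_int D * x = of_int i" using D(2) Ints_cases by metis
    then have "x = of_int i / of_int D" using D(1) by (simp add: field_simps)
    then show ?thesis using \<open>x \<in> C\<close> by (auto simp: I_def)
  qed
  show ?thesis
  proof (cases "\<exists>i\<in>I. i \<noteq> 0")
    case False
    have "x = 0" if xC: "x \<in> C" for x
    proof -
      obtain i where "i \<in> I" "x = of_int i / of_int D" using CI[OF xC] by blast
      then show ?thesis using False by auto
    qed
    then have "C = {0}" using z by blast
    then show ?thesis by (intro exI[of _ 0]) auto
  next
    case True
    then obtain i where i: "i \<in> I" "i \<noteq> 0" by auto
    have neg: "- j \<in> I" if "j \<in> I" for j using Icl[OF I0 that, of 1] by simp
    have "\<exists>k::nat. k > 0 \<and> int k \<in> I"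
    proof (cases "i > 0")
      case True then show ?thesis using i by (intro exI[of _ "nat i"]) auto
    next
      case False then show ?thesis using i neg[OF i(1)] by (intro exI[of _ "nat (-i)"]) auto
    qed
    define d where "d = (LEAST k::nat. k > 0 \<and> int k \<in> I)"
    have d: "d > 0" "int d \<in> I" using LeastI_ex[OF \<open>\<exists>k::nat. k > 0 \<and> int k \<in> I\<close>] by (auto simp: d_def)
    have dmin: "k \<ge> d" if "k > 0" "int k \<in> I" for k unfolding d_def by (rule Least_le) (use that in auto)
    have dvd: "int d dvd j" if "j \<in> I" for j
    proof -
      have "j - (j div int d) * int d \<in> I" using Icl[OF that d(2)] .
      then have m: "j mod int d \<in> I" by (simp add: minus_div_mult_eq_mod)
      have "j mod int d = 0"
      proof (rule ccontr)
        assume "j mod int d \<noteq> 0"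
        then have "nat (j mod int d) > 0" using d(1) by (simp add: order_le_neq_trans)
        moreover have "int (nat (j mod int d)) \<in> I" using m d(1) by simp
        ultimately have "nat (j mod int d) \<ge> d" using dmin by blast
        moreover have "j mod int d < int d" using d(1) by simp
        moreover have "j mod int d \<ge> 0" using d(1) by simp
        ultimately show False by linarith
      qed
      then show ?thesis by auto
    qed
    define g where "g = of_int (int d) / (of_int D :: rat)"
    have gC: "g \<in> C" using d(2) by (simp add: I_def g_def)
    show ?thesis
    proof (intro exI[of _ g] set_eqI iffI)
      fix x assume "x \<in> C"
      then obtain j where j: "j \<in> I" "x = of_int j / of_int D" using CI by blast
      obtain q where "j = int d * q" using dvd[OF j(1)] by blast
      then have "x = of_int q * g" using j(2) by (simp add: g_def)
      then show "x \<in> range (\<lambda>m::int. of_int m * g)" by blast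
    next
      fix x assume "x \<in> range (\<lambda>m::int. of_int m * g)"
      then obtain m where "x = of_int m * g" by blast
      moreover have "0 - of_int (-m) * g \<in> C" using cl[OF z gC] .
      ultimately show "x \<in> C" by simp
    qed
  qed
qed

lemma zspan_sub:
  fixes H :: "'a::comm_ring_1 set"
  assumes H0: "0 \<in> H" and Hcl: "\<And>x y m. x \<in> H \<Longrightarrow> y \<in> H \<Longrightarrow> x - of_int m * y \<in> H"
    and BH: "B \<subseteq> H"
  shows "zspan B \<subseteq> H"
proof
  fix x assume "x \<in> zspan B"
  then obtain S c where S: "finite S" "S \<subseteq> B" and x: "x = (\<Sum>b\<in>S. of_int (c b) * b)"
    unfolding zspan_def by blast
  have "(\<Sum>b\<in>S. of_int (c b) * b) \<in> H" using S
  proof (induction S rule: finite_induct)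
    case empty then show ?case using H0 by simp
  next
    case (insert y S)
    have "(\<Sum>b\<in>S. of_int (c b) * b) - of_int (- c y) * y \<in> H"
      using insert BH by (intro Hcl) auto
    then show ?case using insert by (simp add: add.commute)
  qed
  then show "x \<in> H" using x by simp
qed

lemma zspan_closed:
  assumes "x \<in> zspan B" "y \<in> zspan B"
  shows "x + of_int m * y \<in> zspan (B :: 'a::comm_ring_1 set)"
proof -
  obtain S1 c1 where S1: "finite S1" "S1 \<subseteq> B" and x: "x = (\<Sum>b\<in>S1. of_int (c1 b) * b)"
    using assms(1) unfolding zspan_def by blast
  obtain S2 c2 where S2: "finite S2" "S2 \<subseteq> B" and y: "y = (\<Sum>b\<in>S2. of_int (c2 b) * b)"
    using assms(2) unfolding zspan_def by blast
  define c where "c b = (if b \<in> S1 then c1 b else 0) + m * (if b \<in> S2 then c2 b else 0)" for b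
  have e1: "(\<Sum>b\<in>S1 \<union> S2. of_int (if b \<in> S1 then c1 b else 0) * b) = (\<Sum>b\<in>S1. of_int (c1 b) * b)"
    by (rule sum.mono_neutral_cong_right) (use S1 S2 in auto)
  have e2: "(\<Sum>b\<in>S1 \<union> S2. of_int (if b \<in> S2 then c2 b else 0) * b) = (\<Sum>b\<in>S2. of_int (c2 b) * b)"
    by (rule sum.mono_neutral_cong_right) (use S1 S2 in auto)
  have "(\<Sum>b\<in>S1 \<union> S2. of_int (c b) * b) = x + of_int m * y"
    unfolding x y e1[symmetric] e2[symmetric] c_def
    by (simp add: sum.distrib sum_distrib_left algebra_simps)
  then show ?thesis unfolding zspan_def using S1 S2
    by (intro CollectI exI[of _ "S1 \<union> S2"] exI[of _ c]) auto
qed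

lemma zspan_0: "0 \<in> zspan B"
  unfolding zspan_def by (intro CollectI exI[of _ "{}"]) auto

lemma zspan_base: "b \<in> B \<Longrightarrow> b \<in> zspan B"
  unfolding zspan_def by (intro CollectI exI[of _ "{b}"] exI[of _ "\<lambda>_. 1"]) auto

lemma tri_free:
  fixes H :: "'a::comm_ring_1 set" and \<phi> :: "nat \<Rightarrow> 'a \<Rightarrow> rat"
  assumes H0: "0 \<in> H" and Hcl: "\<And>x y m. x \<in> H \<Longrightarrow> y \<in> H \<Longrightarrow> x - of_int m * y \<in> H"
    and padd: "\<And>n x y. \<phi> n (x + y) = \<phi> n x + \<phi> n y"
    and pmul: "\<And>n m x. \<phi> n (of_int m * x) = of_int m * \<phi> n x"
    and fin: "\<And>h. h \<in> H \<Longrightarrow> \<exists>n. \<forall>m>n. \<phi> m h = 0"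
    and zero: "\<And>h. h \<in> H \<Longrightarrow> \<forall>m. \<phi> m h = 0 \<Longrightarrow> h = 0"
    and bnd: "\<And>n. \<exists>D. D \<noteq> 0 \<and> (\<forall>h\<in>H. (\<forall>m>n. \<phi> m h = 0) \<longrightarrow> of_int D * \<phi> n h \<in> \<int>)"
  shows "free_abelian H"
proof -
  have p0: "\<phi> n 0 = 0" for n using padd[of n 0 0] by simp
  have pdiff: "\<phi> n (x - of_int m * y) = \<phi> n x - of_int m * \<phi> n y" for n x y m
    using padd[of n x "of_int (-m) * y"] pmul[of n "-m" y] by simp
  have psum: "\<phi> n (\<Sum>b\<in>S. of_int (c b) * b) = (\<Sum>b\<in>S. of_int (c b) * \<phi> n b)" if "finite S" for n S c
    using that by (induction S rule: finite_induct) (auto simp: p0 padd pmul)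
  define A where "A n = {h \<in> H. \<forall>m>n. \<phi> m h = 0}" for n
  have "\<exists>g. \<phi> n ` A n = range (\<lambda>m::int. of_int m * g)" for n
  proof -
    obtain D where D: "D \<noteq> 0" "\<forall>h\<in>H. (\<forall>m>n. \<phi> m h = 0) \<longrightarrow> of_int D * \<phi> n h \<in> \<int>"
      using bnd by blast
    show ?thesis
    proof (rule cyclic_rat_subgroup[OF _ _ D(1)])
      show "0 \<in> \<phi> n ` A n" using H0 p0 by (auto simp: A_def image_iff intro!: bexI[of _ 0])
    next
      fix x y m assume "x \<in> \<phi> n ` A n" "y \<in> \<phi> n ` A n"
      then obtain x' y' where "x' \<in> A n" "y' \<in> A n" "x = \<phi> n x'" "y = \<phi> n y'" by blast
      moreover have "x' - of_int m * y' \<in> A n" using \<open>x' \<in> A n\<close> \<open>y' \<in> A n\<close>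
        by (auto simp: A_def pdiff Hcl)
      ultimately show "x - of_int m * y \<in> \<phi> n ` A n"
        by (metis image_eqI pdiff)
    next
      fix x assume "x \<in> \<phi> n ` A n"
      then show "of_int D * x \<in> \<int>" using D(2) by (auto simp: A_def)
    qed
  qed
  then obtain g where g: "\<And>n. \<phi> n ` A n = range (\<lambda>m::int. of_int m * g n)" by metis
  have "\<exists>x. x \<in> A n \<and> \<phi> n x = g n" for n
  proof -
    have "g n \<in> \<phi> n ` A n" unfolding g by (auto intro: range_eqI[of _ _ 1])
    then show ?thesis by auto
  qed
  then obtain b where b: "\<And>n. b n \<in> A n" "\<And>n. \<phi> n (b n) = g n" by metis
  have bH: "b n \<in> H" for n using b(1) by (simp add: A_def)
  have bz: "\<phi> m (b n) = 0" if "m > n" for m n using b(1)[of n] that by (simp add: A_def)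
  define B where "B = b ` {n. g n \<noteq> 0}"
  have inj: "inj_on b {n. g n \<noteq> 0}"
  proof (rule inj_onI)
    fix m n assume "m \<in> {n. g n \<noteq> 0}" "n \<in> {n. g n \<noteq> 0}" "b m = b n"
    then have gm: "g m \<noteq> 0" and gn: "g n \<noteq> 0" and bb: "b m = b n" by auto
    show "m = n"
    proof (rule ccontr)
      assume "m \<noteq> n"
      then consider "m < n" | "n < m" by linarith
      then show False
      proof cases
        case 1
        have "\<phi> n (b m) = 0" using bz[OF 1] .
        then show False using bb b(2)[of n] gn by simp
      next
        case 2
        have "\<phi> m (b n) = 0" using bz[OF 2] .
        then show False using bb b(2)[of m] gm by simp
      qed
    qed
  qed
  have span1: "zspan B \<subseteq> H" by (rule zspan_sub[OF H0 Hcl]) (auto simp: B_def bH)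
  have step: "h \<in> zspan B" if h: "h \<in> A n" and red: "\<And>h'. h' \<in> A n \<Longrightarrow> \<phi> n h' = 0 \<Longrightarrow> h' \<in> zspan B" for h n
  proof -
    have "\<phi> n h \<in> range (\<lambda>m::int. of_int m * g n)" using h g[of n] by blast
    then obtain q where q: "\<phi> n h = of_int q * g n" by blast
    define h' where "h' = h - of_int q * b n"
    have hH: "h \<in> H" and hz: "\<forall>m>n. \<phi> m h = 0" using h by (auto simp: A_def)
    have h'H: "h' \<in> H" unfolding h'_def using Hcl[OF hH bH] .
    have "\<forall>m>n. \<phi> m h' = 0" unfolding h'_def pdiff using hz bz by simp
    then have h'A: "h' \<in> A n" using h'H by (simp add: A_def)
    have h'0: "\<phi> n h' = 0" unfolding h'_def pdiff q b(2) by simp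
    show ?thesis
    proof (cases "g n = 0")
      case True
      then show ?thesis using red[OF h] q by simp
    next
      case False
      have "h' + of_int q * b n \<in> zspan B"
        by (rule zspan_closed[OF red[OF h'A h'0] zspan_base]) (use False in \<open>auto simp: B_def\<close>)
      then show ?thesis by (simp add: h'_def)
    qed
  qed
  have span2: "\<forall>h\<in>A n. h \<in> zspan B" for n
  proof (induction n)
    case 0
    show ?case
    proof
      fix h assume "h \<in> A 0"
      then show "h \<in> zspan B"
      proof (rule step)
        fix h'
        assume h'0: "h' \<in> A 0" "\<phi> 0 h' = 0"
        have "\<forall>m. \<phi> m h' = 0"
        proof
          fix m show "\<phi> m h' = 0" using h'0 by (cases m) (auto simp: A_def)
        qed
        then have "h' = 0" using zero h'0 by (simp add: A_def)
        then show "h' \<in> zspan B" by (simp add: zspan_0)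
      qed
    qed
  next
    case (Suc n)
    show ?case
    proof
      fix h assume "h \<in> A (Suc n)"
      then show "h \<in> zspan B"
      proof (rule step)
        fix h' assume "h' \<in> A (Suc n)" "\<phi> (Suc n) h' = 0"
        then have "h' \<in> A n" unfolding A_def
        proof (intro CollectI conjI allI impI)
          fix m assume "m > n"
          assume "h' \<in> {h \<in> H. \<forall>m>Suc n. \<phi> m h = 0}" "\<phi> (Suc n) h' = 0"
          then show "\<phi> m h' = 0" using \<open>m > n\<close> by (cases "m = Suc n") auto
        qed simp
        then show "h' \<in> zspan B" using Suc by blast
      qed
    qed
  qed
  have span: "zspan B = H"
  proof
    show "H \<subseteq> zspan B"
    proof
      fix h assume "h \<in> H"
      then obtain n where "\<forall>m>n. \<phi> m h = 0" using fin by blast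
      then have "h \<in> A n" using \<open>h \<in> H\<close> by (simp add: A_def)
      then show "h \<in> zspan B" using span2 by blast
    qed
  qed (rule span1)
  have indep: "zindependent B"
    unfolding zindependent_def
  proof (intro allI impI ballI)
    fix S c y
    assume asm: "finite S \<and> S \<subseteq> B \<and> (\<Sum>b\<in>S. of_int (c b) * b) = 0" and yS: "y \<in> S"
    show "c y = 0"
    proof (rule ccontr)
      assume cy: "c y \<noteq> 0"
      define T where "T = {n. g n \<noteq> 0 \<and> b n \<in> S \<and> c (b n) \<noteq> 0}"
      have "inj_on b T" using inj by (rule inj_on_subset) (auto simp: T_def)
      moreover have "b ` T \<subseteq> S" by (auto simp: T_def)
      ultimately have Tfin: "finite T"
        using asm by (intro finite_imageD[of b T]) (auto intro: finite_subset)
      obtain n0 where n0: "g n0 \<noteq> 0" "y = b n0" using yS asm by (auto simp: B_def)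
      have "n0 \<in> T" using n0 yS cy by (auto simp: T_def)
      define N where "N = Max T"
      have NT: "N \<in> T" using Tfin \<open>n0 \<in> T\<close> by (auto simp: N_def intro: Max_in)
      have Nmax: "m \<le> N" if "m \<in> T" for m using Tfin that by (simp add: N_def)
      have "(\<Sum>x\<in>S. of_int (c x) * \<phi> N x) = of_int (c (b N)) * \<phi> N (b N) + (\<Sum>x\<in>S - {b N}. of_int (c x) * \<phi> N x)"
        using NT asm by (intro sum.remove) (auto simp: T_def)
      also have "(\<Sum>x\<in>S - {b N}. of_int (c x) * \<phi> N x) = 0"
      proof (intro sum.neutral ballI)
        fix x assume x: "x \<in> S - {b N}"
        then obtain m where m: "g m \<noteq> 0" "x = b m" using asm by (auto simp: B_def)
        have "m \<noteq> N" using x m by auto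
        show "of_int (c x) * \<phi> N x = 0"
        proof (cases "m < N")
          case True then show ?thesis using m bz by simp
        next
          case False
          then have "m > N" using \<open>m \<noteq> N\<close> by simp
          then have "m \<notin> T" using Nmax by (meson leD)
          then have "c x = 0" using m x by (auto simp: T_def)
          then show ?thesis by simp
        qed
      qed
      finally have e: "(\<Sum>x\<in>S. of_int (c x) * \<phi> N x) = of_int (c (b N)) * g N"
        by (simp add: b(2))
      have "\<phi> N (\<Sum>x\<in>S. of_int (c x) * x) = (\<Sum>x\<in>S. of_int (c x) * \<phi> N x)"
        using asm psum by blast
      then have "of_int (c (b N)) * g N = 0" using asm p0 e by simp
      then show False using NT by (auto simp: T_def)
    qed
  qed
  show ?thesis unfolding free_abelian_def using span indep span1 by (intro exI[of _ B]) (auto simp: B_def bH)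
qed

lemma XXi: "(fls_X::rat fls) ^ n * fls_X_inv ^ n = 1"
  by (simp add: fls_X_inv_power_times_conv_shift fls_X_power_conv_shift_1)
lemma lp_coeff: "fls_nth (laurent_of_poly f * fls_X_inv ^ k) j = (if j + int k < 0 then 0 else coeff f (nat (j + int k)))"
  by (simp add: laurent_of_poly_def fls_X_inv_power_times_conv_shift)
lemma lp_add: "laurent_of_poly (p + q) = laurent_of_poly p + laurent_of_poly q"
  by (simp add: laurent_of_poly_def fps_of_poly_add)
lemma lp_diff: "laurent_of_poly (p - q) = laurent_of_poly p - laurent_of_poly q"
  by (simp add: laurent_of_poly_def fps_of_poly_diff)
lemma lp_mult: "laurent_of_poly (p * q) = laurent_of_poly p * laurent_of_poly q"
  by (simp add: laurent_of_poly_def fps_of_poly_mult fls_times_fps_to_fls)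
lemma lp_monom: "laurent_of_poly (monom 1 k) = fls_X ^ k"
  by (simp add: laurent_of_poly_def fps_of_poly_monom' fps_to_fls_power)
lemma lp_const: "laurent_of_poly [:of_int m:] = of_int m"
  by (simp add: laurent_of_poly_def fps_of_poly_const fps_of_int)
lemma ofint_nth: "fls_nth (of_int m * (x :: rat fls)) j = of_int m * fls_nth x j"
  by (simp add: fls_of_int)
lemma F_diff_mult:
  assumes "p \<in> numerical_polys" "q \<in> numerical_polys" "r \<in> numerical_polys" "s \<in> numerical_polys"
  shows "p * q - r * s \<in> numerical_polys"
proof -
  obtain N1 where N1: "\<forall>n::int. n \<ge> N1 \<longrightarrow> poly p (of_int n) \<in> \<int>" using assms(1) by (auto simp: numerical_polys_def)
  obtain N2 where N2: "\<forall>n::int. n \<ge> N2 \<longrightarrow> poly q (of_int n) \<in> \<int>" using assms(2) by (auto simp: numerical_polys_def)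
  obtain N3 where N3: "\<forall>n::int. n \<ge> N3 \<longrightarrow> poly r (of_int n) \<in> \<int>" using assms(3) by (auto simp: numerical_polys_def)
  obtain N4 where N4: "\<forall>n::int. n \<ge> N4 \<longrightarrow> poly s (of_int n) \<in> \<int>" using assms(4) by (auto simp: numerical_polys_def)
  show ?thesis unfolding numerical_polys_def
  proof (intro CollectI exI[of _ "max (max N1 N2) (max N3 N4)"] allI impI)
    fix n :: int assume "max (max N1 N2) (max N3 N4) \<le> n"
    then have "poly p (of_int n) \<in> \<int>" "poly q (of_int n) \<in> \<int>" "poly r (of_int n) \<in> \<int>" "poly s (of_int n) \<in> \<int>"
      using N1 N2 N3 N4 by auto
    then show "poly (p * q - r * s) (of_int n) \<in> \<int>" by (simp add: Ints_mult Ints_diff)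
  qed
qed

lemma F_const: "[:of_int m:] \<in> numerical_polys"
  by (auto simp: numerical_polys_def)

lemma F_monom: "monom 1 k \<in> numerical_polys"
  by (auto simp: numerical_polys_def poly_monom)

lemma H_cl:
  assumes "x \<in> H_ring" "y \<in> H_ring"
  shows "x - of_int m * y \<in> H_ring"
proof -
  obtain f1 k1 where x: "x = laurent_of_poly f1 * fls_X_inv ^ k1" "f1 \<in> numerical_polys"
    using assms(1) by (auto simp: H_ring_def)
  obtain f2 k2 where y: "y = laurent_of_poly f2 * fls_X_inv ^ k2" "f2 \<in> numerical_polys"
    using assms(2) by (auto simp: H_ring_def)
  define f where "f = f1 * monom 1 k2 - ([:of_int m:] * f2) * monom 1 k1"
  have F0: "0 \<in> numerical_polys" using F_const[of 0] by simp
  have a: "[:of_int m:] * f2 \<in> numerical_polys" using F_diff_mult[OF F_const y(2) F0 F0] by simp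
  have fF: "f \<in> numerical_polys" unfolding f_def by (rule F_diff_mult[OF x(2) F_monom a F_monom])
  have "laurent_of_poly f * fls_X_inv ^ (k1 + k2) =
     (laurent_of_poly f1 * fls_X_inv ^ k1) * (fls_X ^ k2 * fls_X_inv ^ k2)
     - of_int m * (laurent_of_poly f2 * fls_X_inv ^ k2) * (fls_X ^ k1 * fls_X_inv ^ k1)"
    unfolding f_def lp_diff lp_mult lp_monom lp_const by (simp add: power_add algebra_simps)
  also have "\<dots> = x - of_int m * y" by (simp add: XXi x y)
  finally have "x - of_int m * y = laurent_of_poly f * fls_X_inv ^ (k1 + k2)" by simp
  then show ?thesis using fF unfolding H_ring_def by blast
qed

lemma H_0: "0 \<in> H_ring"
proof -
  have "(0::rat fls) = laurent_of_poly [:of_int 0:] * fls_X_inv ^ 0" using lp_const[of 0] by simp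
  then show ?thesis using F_const[of 0] unfolding H_ring_def by blast
qed

definition ee :: "nat \<Rightarrow> int" where
  "ee n = (if even n then - int (n div 2) else int (n div 2) + 1)"

lemma ee_surj: "\<exists>n. ee n = j"
proof (cases "j \<le> 0")
  case True
  then show ?thesis by (intro exI[of _ "2 * nat (-j)"]) (simp add: ee_def)
next
  case False
  then show ?thesis by (intro exI[of _ "2 * nat (j - 1) + 1"]) (simp add: ee_def)
qed

lemma ee_big: "m > 2 * K + 1 \<Longrightarrow> ee m < - int K \<or> ee m > int K"
proof -
  assume m: "m > 2 * K + 1"
  show ?thesis
  proof (cases "even m")
    case True
    then obtain r where "m = 2 * r" by (rule evenE)
    then show ?thesis using m True by (simp add: ee_def)
  next
    case False
    then obtain r where "m = 2 * r + 1" by (rule oddE)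
    then show ?thesis using m False by (simp add: ee_def)
  qed
qed

lemma H_fin:
  assumes "h \<in> H_ring" shows "\<exists>n. \<forall>m>n. fls_nth h (ee m) = 0"
proof -
  obtain f k where h: "h = laurent_of_poly f * fls_X_inv ^ k"
    using assms by (auto simp: H_ring_def)
  show ?thesis
  proof (intro exI[of _ "2 * (k + degree f) + 1"] allI impI)
    fix m assume "m > 2 * (k + degree f) + 1"
    then have "ee m < - int (k + degree f) \<or> ee m > int (k + degree f)" by (rule ee_big)
    then show "fls_nth h (ee m) = 0"
    proof
      assume "ee m < - int (k + degree f)"
      then have "ee m + int k < 0" by linarith
      then show ?thesis unfolding h lp_coeff by simp
    next
      assume a: "ee m > int (k + degree f)"
      then have n: "\<not> ee m + int k < 0" by linarith
      from a have "nat (ee m + int k) > degree f" by linarith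
      then have "coeff f (nat (ee m + int k)) = 0" by (rule coeff_eq_0)
      then show ?thesis unfolding h lp_coeff using n by simp
    qed
  qed
qed

lemma H_zero: "\<forall>m. fls_nth h (ee m) = 0 \<Longrightarrow> (h::rat fls) = 0"
proof (rule fls_eqI)
  fix j assume h: "\<forall>m. fls_nth h (ee m) = 0"
  obtain n where "ee n = j" using ee_surj by blast
  then show "fls_nth h j = fls_nth 0 j" using h by auto
qed


definition Rb :: "int \<Rightarrow> rat set" where
  "Rb b = {x. \<exists>m::nat. x * of_int b ^ m \<in> \<int>}"

lemma Rb_int: "x \<in> \<int> \<Longrightarrow> x \<in> Rb b"
  unfolding Rb_def by (intro CollectI exI[of _ 0]) simp

lemma Rb_add: assumes "x \<in> Rb b" "y \<in> Rb b" shows "x + y \<in> Rb b"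
proof -
  obtain m1 where m1: "x * of_int b ^ m1 \<in> \<int>" using assms(1) by (auto simp: Rb_def)
  obtain m2 where m2: "y * of_int b ^ m2 \<in> \<int>" using assms(2) by (auto simp: Rb_def)
  have "(x + y) * of_int b ^ (m1 + m2) = (x * of_int b ^ m1) * of_int b ^ m2 + (y * of_int b ^ m2) * of_int b ^ m1"
    by (simp add: power_add algebra_simps)
  also have "\<dots> \<in> \<int>"
  proof -
    have i: "(of_int b :: rat) ^ n \<in> \<int>" for n by (intro Ints_power Ints_of_int)
    show ?thesis by (rule Ints_add[OF Ints_mult[OF m1 i] Ints_mult[OF m2 i]])
  qed
  finally show ?thesis unfolding Rb_def by blast
qed

lemma Rb_mult: assumes "x \<in> Rb b" "y \<in> Rb b" shows "x * y \<in> Rb b"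
proof -
  obtain m1 where m1: "x * of_int b ^ m1 \<in> \<int>" using assms(1) by (auto simp: Rb_def)
  obtain m2 where m2: "y * of_int b ^ m2 \<in> \<int>" using assms(2) by (auto simp: Rb_def)
  have "(x * y) * of_int b ^ (m1 + m2) = (x * of_int b ^ m1) * (y * of_int b ^ m2)"
    by (simp add: power_add algebra_simps)
  also have "\<dots> \<in> \<int>" by (rule Ints_mult[OF m1 m2])
  finally show ?thesis unfolding Rb_def by blast
qed

lemma Rb_sum: "finite A \<Longrightarrow> (\<And>a. a \<in> A \<Longrightarrow> f a \<in> Rb b) \<Longrightarrow> sum f A \<in> Rb b"
  by (induction A rule: finite_induct) (auto intro: Rb_add Rb_int)

lemma Rb_prod: "finite A \<Longrightarrow> (\<And>a. a \<in> A \<Longrightarrow> f a \<in> Rb b) \<Longrightarrow> prod f A \<in> Rb b"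
  by (induction A rule: finite_induct) (auto intro: Rb_mult Rb_int)

lemma Rb_powi: assumes "b \<noteq> 0" shows "(of_int b :: rat) powi z \<in> Rb b"
proof (cases "z \<ge> 0")
  case True
  then have "(of_int b :: rat) powi z = of_int (b ^ nat z)" by (simp add: power_int_nonneg_exp)
  then show ?thesis by (simp add: Rb_int)
next
  case False
  have "(of_int b :: rat) powi z * of_int b ^ nat (-z) = 1"
    using False assms by (simp add: power_int_def power_mult_distrib[symmetric])
  then show ?thesis unfolding Rb_def by (intro CollectI exI[of _ "nat (-z)"]) simp
qed

lemma Rb_div: assumes "x \<in> \<int>" shows "x / of_int b ^ n \<in> Rb b"
proof (cases "b = 0")
  case True
  then show ?thesis using assms by (cases n) (auto simp: Rb_int)
next
  case False
  have "x / of_int b ^ n * of_int b ^ n = x" using False by simp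
  then show ?thesis using assms unfolding Rb_def by (intro CollectI exI[of _ n]) simp
qed

lemma Q_coeff:
  assumes "finite S" "b \<noteq> 0"
  shows "coeff (\<Prod>r\<in>S. [:- ((of_int b :: rat) powi r), 1:]) i \<in> Rb b"
  using assms(1)
proof (induction S arbitrary: i rule: finite_induct)
  case empty
  then show ?case by (cases i) (auto simp: Rb_int)
next
  case (insert r S)
  let ?P = "\<Prod>r\<in>S. [:- ((of_int b :: rat) powi r), 1:]"
  have "(\<Prod>r\<in>insert r S. [:- ((of_int b :: rat) powi r), 1:]) = smult (- ((of_int b :: rat) powi r)) ?P + pCons 0 ?P"
    using insert by (simp add: mult_pCons_left)
  moreover have "coeff (smult (- ((of_int b :: rat) powi r)) ?P + pCons 0 ?P) i \<in> Rb b"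
  proof -
    have a: "- ((of_int b :: rat) powi r) * coeff ?P i \<in> Rb b"
      using Rb_mult[OF Rb_mult[OF Rb_int[of "-1"] Rb_powi[OF assms(2)]] insert.IH[of i]] by simp
    show ?thesis
    proof (cases i)
      case 0 then show ?thesis using a by simp
    next
      case (Suc i')
      then show ?thesis using Rb_add[OF a insert.IH[of i']] by simp
    qed
  qed
  ultimately show ?case by simp
qed

lemma key2:
  fixes c :: "int \<Rightarrow> rat" and b :: int
  assumes J: "finite J" "e \<in> J" and b: "b \<noteq> 0"
  defines "Q \<equiv> \<Prod>r\<in>J-{e}. [:- ((of_int b :: rat) powi r), 1:]"
  shows "(\<Sum>i\<le>degree Q. coeff Q i * (\<Sum>j\<in>J. c j * (of_int b ^ (s+i)) powi j))
       = c e * ((of_int b) powi e)^s * (\<Prod>r\<in>J-{e}. (of_int b powi e - of_int b powi r))"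
proof -
  let ?B = "of_int b :: rat"
  have pw: "(?B ^ (s+i)) powi j = (?B powi j)^s * (?B powi j)^i" for i j
  proof -
    have "(?B powi j)^s * (?B powi j)^i = ?B powi (j * int s) * ?B powi (j * int i)"
      by (simp add: power_int_power')
    also have "\<dots> = ?B powi (j * int s + j * int i)" using b by (simp add: power_int_add)
    also have "\<dots> = (?B ^ (s+i)) powi j" by (simp add: power_int_power algebra_simps)
    finally show ?thesis by simp
  qed
  have "(\<Sum>i\<le>degree Q. coeff Q i * (\<Sum>j\<in>J. c j * (?B ^ (s+i)) powi j))
      = (\<Sum>i\<le>degree Q. \<Sum>j\<in>J. c j * (?B powi j)^s * (coeff Q i * (?B powi j)^i))"
    using pw by (simp add: sum_distrib_left add.commute mult.assoc mult.left_commute)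
  also have "\<dots> = (\<Sum>j\<in>J. c j * (?B powi j)^s * (\<Sum>i\<le>degree Q. coeff Q i * (?B powi j)^i))"
    by (subst sum.swap) (simp add: sum_distrib_left)
  also have "\<dots> = (\<Sum>j\<in>J. c j * (?B powi j)^s * poly Q (?B powi j))"
    by (simp add: poly_altdef)
  also have "\<dots> = (\<Sum>j\<in>J. c j * (?B powi j)^s * (\<Prod>r\<in>J-{e}. (?B powi j - ?B powi r)))"
    by (simp add: Q_def poly_prod)
  also have "\<dots> = c e * (?B powi e)^s * (\<Prod>r\<in>J-{e}. (?B powi e - ?B powi r))
      + (\<Sum>j\<in>J-{e}. c j * (?B powi j)^s * (\<Prod>r\<in>J-{e}. (?B powi j - ?B powi r)))"
    using J by (simp add: sum.remove)
  also have "(\<Sum>j\<in>J-{e}. c j * (?B powi j)^s * (\<Prod>r\<in>J-{e}. (?B powi j - ?B powi r))) = 0"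
  proof (intro sum.neutral ballI)
    fix j assume "j \<in> J - {e}"
    then have "(\<Prod>r\<in>J-{e}. (?B powi j - ?B powi r)) = 0" using J by (intro prod_zero bexI[of _ j]) auto
    then show "c j * (?B powi j)^s * (\<Prod>r\<in>J-{e}. (?B powi j - ?B powi r)) = 0" by simp
  qed
  finally show ?thesis by simp
qed

lemma key1:
  fixes f :: "rat poly" and x :: rat
  assumes J: "finite J" and supp: "\<And>j. fls_nth (laurent_of_poly f * fls_X_inv ^ k) j \<noteq> 0 \<Longrightarrow> j \<in> J"
    and x: "x \<noteq> 0"
  shows "(\<Sum>j\<in>J. fls_nth (laurent_of_poly f * fls_X_inv ^ k) j * x powi j) = poly f x / x ^ k"
proof -
  define c where "c j = fls_nth (laurent_of_poly f * fls_X_inv ^ k) j" for j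
  define I where "I = (\<lambda>i. int i - int k) ` {..degree f}"
  have cI: "c (int i - int k) = coeff f i" for i by (simp add: c_def lp_coeff)
  have "poly f x / x ^ k = (\<Sum>i\<le>degree f. coeff f i * x powi (int i - int k))"
    using x by (simp add: poly_altdef sum_divide_distrib power_int_diff)
  also have "\<dots> = (\<Sum>i\<le>degree f. c (int i - int k) * x powi (int i - int k))" by (simp add: cI)
  also have "\<dots> = (\<Sum>j\<in>I. c j * x powi j)"
    unfolding I_def by (subst sum.reindex) (auto simp: inj_on_def)
  also have "\<dots> = (\<Sum>j\<in>I \<inter> J. c j * x powi j)"
    by (rule sum.mono_neutral_right) (use supp in \<open>auto simp: I_def c_def\<close>)
  also have "\<dots> = (\<Sum>j\<in>J. c j * x powi j)"
  proof (rule sum.mono_neutral_left[OF J])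
    show "\<forall>j\<in>J - I \<inter> J. c j * x powi j = 0"
    proof
      fix j assume j: "j \<in> J - I \<inter> J"
      show "c j * x powi j = 0"
      proof (rule ccontr)
        assume "c j * x powi j \<noteq> 0"
        then have cj: "c j \<noteq> 0" by auto
        then have p: "\<not> j + int k < 0" and cf: "coeff f (nat (j + int k)) \<noteq> 0"
          by (auto simp: c_def lp_coeff split: if_splits)
        from cf have "nat (j + int k) \<le> degree f" by (rule le_degree)
        moreover have "j = int (nat (j + int k)) - int k" using p by simp
        ultimately have "j \<in> I" unfolding I_def by blast
        then show False using j by blast
      qed
    qed
  qed auto
  finally show ?thesis by (simp add: c_def)
qed

lemma pow_ge: fixes b :: int assumes "b \<ge> 2" shows "b ^ n \<ge> int n"
proof -
  have "int n < int (2 ^ n)" using less_exp[of n] by linarith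
  also have "int (2 ^ n) = (2::int) ^ n" by simp
  also have "\<dots> \<le> b ^ n" using assms by (intro power_mono) auto
  finally show ?thesis by simp
qed

lemma bound_b:
  fixes b :: int
  assumes b: "b \<ge> 2" and J: "finite J" "e \<in> J" and hH: "h \<in> H_ring"
    and supp: "\<And>j. fls_nth h j \<noteq> 0 \<Longrightarrow> j \<in> J"
  shows "fls_nth h e * (\<Prod>r\<in>J-{e}. ((of_int b :: rat) powi e - of_int b powi r)) \<in> Rb b"
proof -
  let ?B = "of_int b :: rat"
  have b0: "b \<noteq> 0" using b by simp
  obtain f k where h: "h = laurent_of_poly f * fls_X_inv ^ k" and fF: "f \<in> numerical_polys"
    using hH by (auto simp: H_ring_def)
  obtain N where N: "\<And>n::int. n \<ge> N \<Longrightarrow> poly f (of_int n) \<in> \<int>"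
    using fF by (auto simp: numerical_polys_def)
  define s where "s = nat N"
  define Q where "Q = (\<Prod>r\<in>J-{e}. [:- (?B powi r), 1:])"
  have V: "(\<Sum>j\<in>J. fls_nth h j * (?B ^ (s+i)) powi j) \<in> Rb b" for i
  proof -
    have "(\<Sum>j\<in>J. fls_nth h j * (?B ^ (s+i)) powi j) = poly f (?B ^ (s+i)) / (?B ^ (s+i)) ^ k"
      unfolding h by (rule key1[OF J(1)]) (use supp b0 in \<open>auto simp: h\<close>)
    also have "\<dots> = poly f (of_int (b ^ (s+i))) / ?B ^ ((s+i) * k)" by (simp add: power_mult)
    also have "\<dots> \<in> Rb b"
    proof (rule Rb_div, rule N)
      have "int (s + i) \<le> b ^ (s + i)" by (rule pow_ge[OF b])
      then show "N \<le> b ^ (s + i)" unfolding s_def by linarith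
    qed
    finally show ?thesis .
  qed
  have "(\<Sum>i\<le>degree Q. coeff Q i * (\<Sum>j\<in>J. fls_nth h j * (?B ^ (s+i)) powi j)) \<in> Rb b"
    unfolding Q_def using J(1) b0 by (rule_tac Rb_sum) (auto intro!: Rb_mult[OF Q_coeff] V)
  also have "(\<Sum>i\<le>degree Q. coeff Q i * (\<Sum>j\<in>J. fls_nth h j * (?B ^ (s+i)) powi j))
      = fls_nth h e * (?B powi e)^s * (\<Prod>r\<in>J-{e}. (?B powi e - ?B powi r))"
    unfolding Q_def by (rule key2[OF J b0])
  finally have a: "fls_nth h e * (?B powi e)^s * (\<Prod>r\<in>J-{e}. (?B powi e - ?B powi r)) \<in> Rb b" .
  have "(?B powi e)^s * (?B powi (-e))^s = 1"
    using b0 by (simp add: power_mult_distrib[symmetric] power_int_minus)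
  then have "fls_nth h e * (\<Prod>r\<in>J-{e}. (?B powi e - ?B powi r))
     = (fls_nth h e * (?B powi e)^s * (\<Prod>r\<in>J-{e}. (?B powi e - ?B powi r))) * (?B powi (-e))^s"
    by (simp add: algebra_simps)
  also have "\<dots> \<in> Rb b"
    by (rule Rb_mult[OF a]) (simp add: power_int_power' Rb_powi[OF b0])
  finally show ?thesis .
qed

lemma int_23:
  fixes y :: rat
  assumes "y * 2 ^ a \<in> \<int>" "y * 3 ^ c \<in> \<int>"
  shows "y \<in> \<int>"
proof -
  obtain u where u: "y * 2 ^ a = of_int u" using assms(1) Ints_cases by metis
  obtain v where v: "y * 3 ^ c = of_int v" using assms(2) Ints_cases by metis
  have "of_int (u * 3 ^ c) = (of_int (v * 2 ^ a) :: rat)" using u v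
    by (metis mult.commute mult.left_commute of_int_mult of_int_numeral of_int_power)
  then have e: "u * 3 ^ c = v * 2 ^ a" by (simp only: of_int_eq_iff)
  have cop: "coprime ((2::int) ^ a) (3 ^ c)" by simp
  have "(2::int) ^ a dvd u * 3 ^ c" using e by simp
  then have "(2::int) ^ a dvd u" using cop by (simp add: coprime_dvd_mult_left_iff)
  then obtain w where "u = 2 ^ a * w" by blast
  then have "y * 2 ^ a = of_int w * 2 ^ a" using u by simp
  then have "y = of_int w" by simp
  then show ?thesis by simp
qed

lemma Rb_ex: "x \<in> Rb b \<Longrightarrow> \<exists>m. x * of_int b ^ m \<in> \<int>"
  by (simp add: Rb_def)

lemma K_nonzero:
  fixes b :: int assumes b: "b \<ge> 2" and J: "finite J"
  shows "(\<Prod>r\<in>J-{e}. ((of_int b :: rat) powi e - of_int b powi r)) \<noteq> 0"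
proof -
  have "(of_int b :: rat) powi e \<noteq> of_int b powi r" if "r \<noteq> e" for r
  proof -
    have b1: "(1::rat) < of_int b" using b by simp
    from that consider "r < e" | "e < r" by linarith
    then show ?thesis
    proof cases
      case 1 then show ?thesis using power_int_strict_increasing[OF 1 b1] by simp
    next
      case 2 then show ?thesis using power_int_strict_increasing[OF 2 b1] by simp
    qed
  qed
  then show ?thesis using J by auto
qed

lemma rat_frac: "\<exists>p q. (x::rat) = of_int p / of_int q \<and> q > 0"
proof -
  obtain p q where pq: "quotient_of x = (p, q)" by (cases "quotient_of x") auto
  show ?thesis using quotient_of_div[OF pq] quotient_of_denom_pos[OF pq] by blast
qed

lemma bound_D:
  assumes J: "finite J" "e \<in> J"
  shows "\<exists>D. D \<noteq> 0 \<and> (\<forall>h\<in>H_ring. (\<forall>j. fls_nth h j \<noteq> 0 \<longrightarrow> j \<in> J) \<longrightarrow> of_int D * fls_nth h e \<in> \<int>)"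
proof -
  define K2 where "K2 = (\<Prod>r\<in>J-{e}. ((of_int 2 :: rat) powi e - of_int 2 powi r))"
  define K3 where "K3 = (\<Prod>r\<in>J-{e}. ((of_int 3 :: rat) powi e - of_int 3 powi r))"
  have K2: "K2 \<noteq> 0" unfolding K2_def by (rule K_nonzero) (use J in auto)
  have K3: "K3 \<noteq> 0" unfolding K3_def by (rule K_nonzero) (use J in auto)
  obtain p2 q2 where pq2: "K2 = of_int p2 / of_int q2" "q2 > 0" using rat_frac by blast
  obtain p3 q3 where pq3: "K3 = of_int p3 / of_int q3" "q3 > 0" using rat_frac by blast
  have p2: "p2 \<noteq> 0" using K2 pq2 by auto
  have p3: "p3 \<noteq> 0" using K3 pq3 by auto
  have e2: "of_int p2 = K2 * of_int q2" using pq2 by simp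
  have e3: "of_int p3 = K3 * of_int q3" using pq3 by simp
  show ?thesis
  proof (intro exI[of _ "p2 * p3"] conjI ballI impI)
    show "p2 * p3 \<noteq> 0" using p2 p3 by simp
  next
    fix h assume hH: "h \<in> H_ring" and supp: "\<forall>j. fls_nth h j \<noteq> 0 \<longrightarrow> j \<in> J"
    let ?c = "fls_nth h e"
    have "?c * K2 \<in> Rb 2" unfolding K2_def by (rule bound_b) (use J hH supp in auto)
    then obtain a where a: "?c * K2 * 2 ^ a \<in> \<int>" using Rb_ex[of _ 2] by force
    have "?c * K3 \<in> Rb 3" unfolding K3_def by (rule bound_b) (use J hH supp in auto)
    then obtain a' where a': "?c * K3 * 3 ^ a' \<in> \<int>" using Rb_ex[of _ 3] by force
    let ?y = "of_int (p2 * p3) * ?c"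
    have "?y * 2 ^ a = (?c * K2 * 2 ^ a) * (of_int q2 * of_int p3)"
      using e2 by (simp add: algebra_simps)
    also have "\<dots> \<in> \<int>" by (rule Ints_mult[OF a]) simp
    finally have y2: "?y * 2 ^ a \<in> \<int>" .
    have "?y * 3 ^ a' = (?c * K3 * 3 ^ a') * (of_int q3 * of_int p2)"
      using e3 by (simp add: algebra_simps)
    also have "\<dots> \<in> \<int>" by (rule Ints_mult[OF a']) simp
    finally have y3: "?y * 3 ^ a' \<in> \<int>" .
    show "of_int (p2 * p3) * ?c \<in> \<int>" by (rule int_23[OF y2 y3])
  qed
qed


theorem theorem1p4:
  shows "free_abelian H_ring"
proof (rule tri_free[where \<phi> = "\<lambda>n h. fls_nth h (ee n)"])
  show "0 \<in> H_ring" by (rule H_0)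
next
  fix x y m assume "x \<in> H_ring" "y \<in> H_ring"
  then show "x - of_int m * y \<in> H_ring" by (rule H_cl)
next
  fix n x y show "fls_nth (x + y) (ee n) = fls_nth x (ee n) + fls_nth y (ee n)" by simp
next
  fix n m and x :: "rat fls" show "fls_nth (of_int m * x) (ee n) = of_int m * fls_nth x (ee n)" by (rule ofint_nth)
next
  fix h assume "h \<in> H_ring" then show "\<exists>n. \<forall>m>n. fls_nth h (ee m) = 0" by (rule H_fin)
next
  fix h :: "rat fls" assume "\<forall>m. fls_nth h (ee m) = 0" then show "h = 0" by (rule H_zero)
next
  fix n
  obtain D where D: "D \<noteq> 0" "\<forall>h\<in>H_ring. (\<forall>j. fls_nth h j \<noteq> 0 \<longrightarrow> j \<in> ee ` {..n}) \<longrightarrow> of_int D * fls_nth h (ee n) \<in> \<int>"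
    using bound_D[of "ee ` {..n}" "ee n"] by auto
  show "\<exists>D. D \<noteq> 0 \<and> (\<forall>h\<in>H_ring. (\<forall>m>n. fls_nth h (ee m) = 0) \<longrightarrow> of_int D * fls_nth h (ee n) \<in> \<int>)"
  proof (intro exI[of _ D] conjI ballI impI)
    show "D \<noteq> 0" by (rule D(1))
  next
    fix h assume hH: "h \<in> H_ring" and z: "\<forall>m>n. fls_nth h (ee m) = 0"
    have "\<forall>j. fls_nth h j \<noteq> 0 \<longrightarrow> j \<in> ee ` {..n}"
    proof (intro allI impI)
      fix j assume nz: "fls_nth h j \<noteq> 0"
      obtain m where m: "ee m = j" using ee_surj by blast
      have "m \<le> n"
      proof (rule ccontr)
        assume "\<not> m \<le> n" then have "m > n" by simp
        then show False using z nz m by auto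
      qed
      then show "j \<in> ee ` {..n}" using m by auto
    qed
    then show "of_int D * fls_nth h (ee n) \<in> \<int>" using D(2) hH by blast
  qed
qed

end
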